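(* Let $\Omega$ be a smooth bounded domain in $\mathbb{R}^N$, $N\ge 2$, and let $2<p<\infty$ if $N=2$, $2<p<2N/(N-2)$ if $N\ge3$. For each $0<\varepsilon\le1$ let $u^\varepsilon$ be a critical point of \[ J_\varepsilon(u) = \int_\Omega \left[\tfrac12 |\nabla u|^2 + \mathcal{B}\!\left(\tfrac{u-1}{\varepsilon}\right) - \tfrac1p (u-1)_+^p\right] dx,\quad u\in H^1_0(\Omega), \] with $J_\varepsilon(u^\varepsilon)=c_\varepsilon$. Let $A_0>0$ be a constant such that $(u^\varepsilon-1)_+^{p-1}\le A_0$ in $\Omega$ for all $0<\varepsilon\le 1$, and let $\varphi_0>0$ solve $-\Delta\varphi_0=A_0$ in $\Omega$, $\varphi_0=0$ on $\partial\Omega$. Then for $0<\varepsilon\le1$, $u^\varepsilon(x)\le\varphi_0(x)$ for all $x\in\Omega$; in particular $\{u^\varepsilon\ge1\}\subset\{\varphi_0\ge1\}\subset\subset\Omega$.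
   Context: $t_+=\max\{t,0\}$. $\beta:\mathbb{R}\to[0,2]$ is a fixed smooth function with $\beta(t)=0$ for $t\le0$ and $t\ge1$, $\beta(t)>0$ for $0<t<1$, $\int_0^1\beta=1$; $\mathcal{B}(t)=\int_0^t\beta(s)\,ds$. $\Gamma_\varepsilon=\{\gamma\in C([0,1],H^1_0(\Omega)):\gamma(0)=0,\ J_\varepsilon(\gamma(1))<0\}$ and $c_\varepsilon=\inf_{\gamma\in\Gamma_\varepsilon}\max_{u\in\gamma([0,1])}J_\varepsilon(u)$. Critical points of $J_\varepsilon$ are classical solutions of $\Delta u=\frac1\varepsilon\beta(\frac{u-1}{\varepsilon})-(u-1)_+^{p-1}$ in $\Omega$, $u=0$ on $\partial\Omega$. (Such a constant $A_0$ exists since the $u^\varepsilon$ are uniformly bounded.) *)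

theory Defs
  imports "HOL-Analysis.Analysis"
begin

definition pd :: "'a::euclidean_space \<Rightarrow> ('a \<Rightarrow> real) \<Rightarrow> 'a \<Rightarrow> real" where
  "pd b f x = deriv (\<lambda>t. f (x + t *\<^sub>R b)) 0"

definition has_pd :: "'a::euclidean_space \<Rightarrow> ('a \<Rightarrow> real) \<Rightarrow> 'a \<Rightarrow> bool" where
  "has_pd b f x \<longleftrightarrow> (\<lambda>t. f (x + t *\<^sub>R b)) differentiable (at 0)"

fun pds :: "'a::euclidean_space list \<Rightarrow> ('a \<Rightarrow> real) \<Rightarrow> 'a \<Rightarrow> real" where
  "pds [] f = f"
| "pds (b # bs) f = pd b (pds bs f)"

definition C2_on :: "'a::euclidean_space set \<Rightarrow> ('a \<Rightarrow> real) \<Rightarrow> bool" where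
  "C2_on S f \<longleftrightarrow> continuous_on S f
     \<and> (\<forall>b\<in>Basis. (\<forall>x\<in>S. has_pd b f x) \<and> continuous_on S (pd b f))
     \<and> (\<forall>b\<in>Basis. \<forall>c\<in>Basis. (\<forall>x\<in>S. has_pd c (pd b f) x) \<and> continuous_on S (pd c (pd b f)))"

definition smooth_on :: "'a::euclidean_space set \<Rightarrow> ('a \<Rightarrow> real) \<Rightarrow> bool" where
  "smooth_on S f \<longleftrightarrow> (\<forall>bs. set bs \<subseteq> Basis \<longrightarrow>
      continuous_on S (pds bs f) \<and> (\<forall>b\<in>Basis. \<forall>x\<in>S. has_pd b (pds bs f) x))"

definition laplacian :: "('a::euclidean_space \<Rightarrow> real) \<Rightarrow> 'a \<Rightarrow> real" where
  "laplacian f x = (\<Sum>b\<in>Basis. pd b (pd b f) x)"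

definition smooth_bounded_domain :: "'a::euclidean_space set \<Rightarrow> bool" where
  "smooth_bounded_domain \<Omega> \<longleftrightarrow> open \<Omega> \<and> connected \<Omega> \<and> \<Omega> \<noteq> {} \<and> bounded \<Omega> \<and>
     (\<forall>z\<in>frontier \<Omega>. \<exists>U \<psi>. open U \<and> z \<in> U \<and> smooth_on U \<psi> \<and>
        (\<forall>x\<in>U. \<exists>b\<in>Basis. pd b \<psi> x \<noteq> 0) \<and> \<Omega> \<inter> U = {x\<in>U. \<psi> x < 0})"

definition pos_part :: "real \<Rightarrow> real" where
  "pos_part t = max t 0"

end

theory Submission
  imports Defs
begin

lemma pd_deriv:
  assumes "has_pd b f y"
  shows "((\<lambda>t. f (y + t *\<^sub>R b)) has_real_derivative pd b f y) (at 0)"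
  using assms unfolding has_pd_def pd_def by (simp add: DERIV_deriv_iff_real_differentiable)

lemma pd_deriv_shift:
  assumes "has_pd b f (x + t *\<^sub>R b)"
  shows "((\<lambda>s. f (x + s *\<^sub>R b)) has_real_derivative pd b f (x + t *\<^sub>R b)) (at t)"
proof -
  have "((\<lambda>s. f ((x + t *\<^sub>R b) + s *\<^sub>R b)) has_real_derivative pd b f (x + t *\<^sub>R b)) (at 0)"
    by (rule pd_deriv[OF assms])
  hence "((\<lambda>s. f (x + (s + t) *\<^sub>R b)) has_real_derivative pd b f (x + t *\<^sub>R b)) (at 0)"
    by (simp add: algebra_simps scaleR_add_left)
  thus ?thesis using DERIV_shift[of "\<lambda>s. f (x + s *\<^sub>R b)" _ 0 t] by simp
qed

lemma open_line:
  fixes x b :: "'a::euclidean_space"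
  assumes "open S" "x \<in> S" "b \<in> Basis"
  obtains r where "r > 0" "\<And>t. \<bar>t\<bar> < r \<Longrightarrow> x + t *\<^sub>R b \<in> S"
proof -
  obtain e where e: "e > 0" "ball x e \<subseteq> S" using assms open_contains_ball by blast
  have "x + t *\<^sub>R b \<in> S" if "\<bar>t\<bar> < e" for t
  proof -
    have "dist x (x + t *\<^sub>R b) = \<bar>t\<bar>" using assms(3) by (simp add: dist_norm)
    thus ?thesis using e that by auto
  qed
  thus ?thesis using e that by blast
qed
lemma max_second_deriv:
  fixes h H :: "real \<Rightarrow> real"
  assumes r: "r > 0" and dh: "\<And>t. \<bar>t\<bar> < r \<Longrightarrow> (h has_real_derivative H t) (at t)"
    and dH: "(H has_real_derivative H2) (at 0)" and mx: "\<And>t. \<bar>t\<bar> < r \<Longrightarrow> h t \<le> h 0"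
  shows "H2 \<le> 0"
proof (rule ccontr)
  assume "\<not> H2 \<le> 0" hence H2: "H2 > 0" by simp
  have H0: "H 0 = 0"
    by (rule DERIV_local_max[OF dh[of 0] r]) (use r mx in auto)
  have "((\<lambda>y. (H y - H 0) / (y - 0)) \<longlongrightarrow> H2) (at 0)"
    using dH by (simp add: has_field_derivative_iff)
  hence "\<forall>\<^sub>F y in at 0. (H y - H 0) / (y - 0) > 0"
    using H2 by (rule order_tendstoD(1))
  then obtain d where d: "d > 0" "\<And>y. y \<noteq> 0 \<Longrightarrow> dist y 0 < d \<Longrightarrow> (H y - H 0) / (y - 0) > 0"
    by (auto simp: eventually_at)
  define t where "t = min d r / 2"
  have t: "0 < t" "t < d" "t < r" using d r by (auto simp: t_def)
  have pos: "H y > 0" if "0 < y" "y < d" for y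
    using d(2)[of y] that H0 by (auto simp: zero_less_divide_iff)
  obtain z where z: "0 < z" "z < t" "h t - h 0 = (t - 0) * H z"
    using MVT2[of 0 t h H] t dh by force
  have "H z > 0" using pos z t by auto
  hence "h t - h 0 > 0" using z t by simp
  moreover have "h t \<le> h 0" using mx t by auto
  ultimately show False by simp
qed

theorem lemma4:
  fixes \<Omega> :: "'a::euclidean_space set"
    and p A0 :: real
    and \<beta> :: "real \<Rightarrow> real"
    and u :: "real \<Rightarrow> 'a \<Rightarrow> real"
    and \<phi>0 :: "'a \<Rightarrow> real"
  assumes dim: "DIM('a) \<ge> 2"
    and dom: "smooth_bounded_domain \<Omega>"
    and p_gt: "2 < p"
    and p_sub: "DIM('a) = 2 \<or> p < 2 * real DIM('a) / (real DIM('a) - 2)"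
    and beta_smooth: "smooth_on UNIV \<beta>"
    and beta_range: "\<And>t. 0 \<le> \<beta> t \<and> \<beta> t \<le> 2"
    and beta_zero: "\<And>t. t \<le> 0 \<or> t \<ge> 1 \<Longrightarrow> \<beta> t = 0"
    and beta_pos: "\<And>t. 0 < t \<Longrightarrow> t < 1 \<Longrightarrow> \<beta> t > 0"
    and beta_int: "integral {0..1} \<beta> = 1"
    and u_C2: "\<And>\<epsilon>. 0 < \<epsilon> \<Longrightarrow> \<epsilon> \<le> 1 \<Longrightarrow> C2_on \<Omega> (u \<epsilon>)"
    and u_cont: "\<And>\<epsilon>. 0 < \<epsilon> \<Longrightarrow> \<epsilon> \<le> 1 \<Longrightarrow> continuous_on (closure \<Omega>) (u \<epsilon>)"
    and u_bdry: "\<And>\<epsilon> x. 0 < \<epsilon> \<Longrightarrow> \<epsilon> \<le> 1 \<Longrightarrow> x \<in> frontier \<Omega> \<Longrightarrow> u \<epsilon> x = 0"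
    and u_eq: "\<And>\<epsilon> x. 0 < \<epsilon> \<Longrightarrow> \<epsilon> \<le> 1 \<Longrightarrow> x \<in> \<Omega> \<Longrightarrow>
        laplacian (u \<epsilon>) x = (1 / \<epsilon>) * \<beta> ((u \<epsilon> x - 1) / \<epsilon>) - pos_part (u \<epsilon> x - 1) powr (p - 1)"
    and A0_pos: "A0 > 0"
    and A0_bound: "\<And>\<epsilon> x. 0 < \<epsilon> \<Longrightarrow> \<epsilon> \<le> 1 \<Longrightarrow> x \<in> \<Omega> \<Longrightarrow> pos_part (u \<epsilon> x - 1) powr (p - 1) \<le> A0"
    and phi_C2: "C2_on \<Omega> \<phi>0"
    and phi_cont: "continuous_on (closure \<Omega>) \<phi>0"
    and phi_pos: "\<And>x. x \<in> \<Omega> \<Longrightarrow> \<phi>0 x > 0"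
    and phi_eq: "\<And>x. x \<in> \<Omega> \<Longrightarrow> - laplacian \<phi>0 x = A0"
    and phi_bdry: "\<And>x. x \<in> frontier \<Omega> \<Longrightarrow> \<phi>0 x = 0"
  shows "\<forall>\<epsilon>. 0 < \<epsilon> \<and> \<epsilon> \<le> 1 \<longrightarrow>
           (\<forall>x\<in>\<Omega>. u \<epsilon> x \<le> \<phi>0 x) \<and>
           {x\<in>\<Omega>. u \<epsilon> x \<ge> 1} \<subseteq> {x\<in>\<Omega>. \<phi>0 x \<ge> 1} \<and>
           compact (closure {x\<in>\<Omega>. \<phi>0 x \<ge> 1}) \<and> closure {x\<in>\<Omega>. \<phi>0 x \<ge> 1} \<subseteq> \<Omega>"
proof (intro allI impI)
  fix \<epsilon> :: real
  assume e: "0 < \<epsilon> \<and> \<epsilon> \<le> 1"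
  have oO: "open \<Omega>" and bO: "bounded \<Omega>" and neO: "\<Omega> \<noteq> {}"
    using dom by (auto simp: smooth_bounded_domain_def)
  have cu: "C2_on \<Omega> (u \<epsilon>)" using u_C2 e by auto
  have le: "\<forall>x\<in>\<Omega>. u \<epsilon> x \<le> \<phi>0 x"
  proof (rule ccontr)
    assume "\<not> (\<forall>x\<in>\<Omega>. u \<epsilon> x \<le> \<phi>0 x)"
    then obtain x1 where x1: "x1 \<in> \<Omega>" "u \<epsilon> x1 > \<phi>0 x1" by force
    define K where "K = closure \<Omega>"
    have cK: "compact K" using bO by (simp add: K_def compact_closure)
    have "bounded K" using bO by (simp add: K_def bounded_closure)
    then obtain R where R: "\<And>x. x \<in> K \<Longrightarrow> norm x \<le> R" by (auto simp: bounded_iff)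
    have x1K: "x1 \<in> K" using x1 closure_subset unfolding K_def by blast
    have R0: "R \<ge> 0" using R[OF x1K] norm_ge_zero[of x1] by linarith
    define M where "M = u \<epsilon> x1 - \<phi>0 x1"
    have M: "M > 0" using x1 by (simp add: M_def)
    define \<delta> where "\<delta> = M / (2 * (R^2 + 1))"
    have d0: "\<delta> > 0" using M unfolding \<delta>_def by (intro divide_pos_pos) (auto intro: add_nonneg_pos)
    have dR: "\<delta> * R^2 < M"
    proof -
      have "\<delta> * R^2 = M * (R^2 / (2 * (R^2+1)))" by (simp add: \<delta>_def)
      also have "R^2 / (2 * (R^2+1)) < 1" by (subst divide_less_eq_1_pos) (auto intro: add_nonneg_pos)
      hence "M * (R^2 / (2 * (R^2+1))) < M * 1" using M by (intro mult_strict_left_mono) auto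
      finally show ?thesis by simp
    qed
    define v where "v x = u \<epsilon> x - \<phi>0 x + \<delta> * (norm x)^2" for x
    have cv: "continuous_on K v" unfolding v_def K_def
      by (intro continuous_intros u_cont phi_cont) (use e in auto)
    obtain z where zK: "z \<in> K" and zmax: "\<And>y. y \<in> K \<Longrightarrow> v y \<le> v z"
      using continuous_attains_sup[OF cK _ cv] x1K by blast
    have "v x1 \<ge> M" using d0 by (simp add: v_def M_def)
    hence vz: "v z \<ge> M" using zmax[OF x1K] by simp
    have zO: "z \<in> \<Omega>"
    proof (rule ccontr)
      assume "z \<notin> \<Omega>"
      hence "z \<in> frontier \<Omega>" using zK oO by (simp add: K_def frontier_def interior_open)
      hence "v z = \<delta> * (norm z)^2" using u_bdry phi_bdry e by (simp add: v_def)
      also have "\<dots> \<le> \<delta> * R^2" using R[OF zK] d0 by (intro mult_left_mono power_mono) auto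
      finally show False using dR vz by simp
    qed
    have each: "pd b (pd b (u \<epsilon>)) z - pd b (pd b \<phi>0) z + 2 * \<delta> \<le> 0" if b: "b \<in> Basis" for b
    proof -
      obtain r where r: "r > 0" "\<And>t. \<bar>t\<bar> < r \<Longrightarrow> z + t *\<^sub>R b \<in> \<Omega>"
        using open_line[OF oO zO b] by blast
      have nb: "(norm (z + t *\<^sub>R b))^2 = z \<bullet> z + 2 * t * (z \<bullet> b) + t^2" for t
        unfolding power2_norm_eq_inner using b by (simp add: inner_add_left inner_add_right algebra_simps power2_eq_square inner_commute)
      show ?thesis
      proof (rule max_second_deriv[where h="\<lambda>t. v (z + t *\<^sub>R b)" and r=r and
            H="\<lambda>t. pd b (u \<epsilon>) (z + t *\<^sub>R b) - pd b \<phi>0 (z + t *\<^sub>R b) + \<delta> * (2 * (z \<bullet> b) + 2 * t)"])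
        show "r > 0" by fact
      next
        fix t :: real assume t: "\<bar>t\<bar> < r"
        have i1: "has_pd b (u \<epsilon>) (z + t *\<^sub>R b)" using cu b r(2)[OF t] by (auto simp: C2_on_def)
        have i2: "has_pd b \<phi>0 (z + t *\<^sub>R b)" using phi_C2 b r(2)[OF t] by (auto simp: C2_on_def)
        have eq: "(\<lambda>t. v (z + t *\<^sub>R b)) = (\<lambda>t. u \<epsilon> (z + t *\<^sub>R b) - \<phi>0 (z + t *\<^sub>R b) + \<delta> * (z \<bullet> z + 2 * t * (z \<bullet> b) + t^2))"
          by (simp add: v_def nb)
        show "((\<lambda>t. v (z + t *\<^sub>R b)) has_real_derivative
            pd b (u \<epsilon>) (z + t *\<^sub>R b) - pd b \<phi>0 (z + t *\<^sub>R b) + \<delta> * (2 * (z \<bullet> b) + 2 * t)) (at t)"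
          unfolding eq
          by (rule derivative_eq_intros pd_deriv_shift[OF i1] pd_deriv_shift[OF i2] | simp)+
      next
        have j1: "has_pd b (pd b (u \<epsilon>)) z" using cu b zO by (auto simp: C2_on_def)
        have j2: "has_pd b (pd b \<phi>0) z" using phi_C2 b zO by (auto simp: C2_on_def)
        show "((\<lambda>t. pd b (u \<epsilon>) (z + t *\<^sub>R b) - pd b \<phi>0 (z + t *\<^sub>R b) + \<delta> * (2 * (z \<bullet> b) + 2 * t))
            has_real_derivative pd b (pd b (u \<epsilon>)) z - pd b (pd b \<phi>0) z + 2 * \<delta>) (at 0)"
          by (rule derivative_eq_intros pd_deriv[OF j1] pd_deriv[OF j2] | simp)+
      next
        fix t :: real assume t: "\<bar>t\<bar> < r"
        have "z + t *\<^sub>R b \<in> K" using r(2)[OF t] closure_subset unfolding K_def by blast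
        thus "v (z + t *\<^sub>R b) \<le> v (z + 0 *\<^sub>R b)" using zmax by simp
      qed
    qed
    have "(\<Sum>b\<in>Basis. pd b (pd b (u \<epsilon>)) z - pd b (pd b \<phi>0) z + 2 * \<delta>) \<le> 0"
      using each by (intro sum_nonpos) auto
    hence s: "laplacian (u \<epsilon>) z - laplacian \<phi>0 z + real DIM('a) * (2 * \<delta>) \<le> 0"
      by (simp add: laplacian_def sum.distrib sum_subtractf)
    have "(1 / \<epsilon>) * \<beta> ((u \<epsilon> z - 1) / \<epsilon>) \<ge> 0" using e beta_range by simp
    hence "laplacian (u \<epsilon>) z \<ge> - A0" using u_eq[of \<epsilon> z] A0_bound[of \<epsilon> z] e zO by linarith
    moreover have "laplacian \<phi>0 z = - A0" using phi_eq[OF zO] by simp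
    moreover have "real DIM('a) * (2 * \<delta>) > 0" using d0 by simp
    ultimately show False using s by linarith
  qed
  define S where "S = {x\<in>\<Omega>. \<phi>0 x \<ge> 1}"
  have cl: "closed (closure \<Omega> \<inter> \<phi>0 -` {1..})"
    by (rule continuous_closed_preimage[OF phi_cont]) auto
  have "closure S \<subseteq> closure \<Omega> \<inter> \<phi>0 -` {1..}"
    by (rule closure_minimal[OF _ cl]) (use closure_subset in \<open>auto simp: S_def\<close>)
  moreover have "closure \<Omega> \<inter> \<phi>0 -` {1..} \<subseteq> \<Omega>"
  proof
    fix x assume x: "x \<in> closure \<Omega> \<inter> \<phi>0 -` {1..}"
    hence "x \<notin> frontier \<Omega>" using phi_bdry by fastforce
    thus "x \<in> \<Omega>" using x oO by (simp add: frontier_def interior_open)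
  qed
  ultimately have sub: "closure S \<subseteq> \<Omega>" by blast
  have "bounded S" using bO by (rule bounded_subset) (auto simp: S_def)
  hence "compact (closure S)" by (simp add: compact_closure)
  moreover have "{x\<in>\<Omega>. u \<epsilon> x \<ge> 1} \<subseteq> S" using le by (auto simp: S_def)
  ultimately show "(\<forall>x\<in>\<Omega>. u \<epsilon> x \<le> \<phi>0 x) \<and> {x\<in>\<Omega>. u \<epsilon> x \<ge> 1} \<subseteq> {x\<in>\<Omega>. \<phi>0 x \<ge> 1} \<and>
           compact (closure {x\<in>\<Omega>. \<phi>0 x \<ge> 1}) \<and> closure {x\<in>\<Omega>. \<phi>0 x \<ge> 1} \<subseteq> \<Omega>"
    using le sub by (simp add: S_def)
qed

end
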